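(* Let $T:X\rightrightarrows X^*$ be a maximal monotone operator on a real Banach space $X$ with $\mathrm{int}\,D_T\ne\emptyset$. Then $T$ is directionally inf bounded at every $x\in\mathrm{int}\,D_T$.
   Context: For $x\in X$ and $A\subset X$, $K_{x,A}=\{(1-t)x+ta: 0\le t\le1,\ a\in A\}$; $B(x,\epsilon)$ is the open ball. A monotone operator $T$ is directionally inf bounded at $x\in D_T$ if for every $y\in X$ there exist $\epsilon>0$ and $M>0$ such that for every $z\in K_{y,B(x,\epsilon)}\cap D_T$ there is $z^*\in T(z)$ with $\langle z^*,z-y\rangle\le M\|z-y\|$. *)

theory Defs
  imports "HOL-Analysis.Analysis"
begin

definition dom_op :: "('a::real_normed_vector \<Rightarrow> ('a \<Rightarrow>\<^sub>L real) set) \<Rightarrow> 'a set" where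
  "dom_op T = {x. T x \<noteq> {}}"

definition monotone_op :: "('a::real_normed_vector \<Rightarrow> ('a \<Rightarrow>\<^sub>L real) set) \<Rightarrow> bool" where
  "monotone_op T \<longleftrightarrow> (\<forall>x y xs ys. xs \<in> T x \<longrightarrow> ys \<in> T y \<longrightarrow> 0 \<le> blinfun_apply (xs - ys) (x - y))"

definition maximal_monotone_op :: "('a::real_normed_vector \<Rightarrow> ('a \<Rightarrow>\<^sub>L real) set) \<Rightarrow> bool" where
  "maximal_monotone_op T \<longleftrightarrow> monotone_op T \<and>
     (\<forall>S. monotone_op S \<and> (\<forall>x. T x \<subseteq> S x) \<longrightarrow> S = T)"

definition Kset :: "'a::real_vector \<Rightarrow> 'a set \<Rightarrow> 'a set" where
  "Kset x A = {(1 - t) *\<^sub>R x + t *\<^sub>R a | t a. 0 \<le> t \<and> t \<le> 1 \<and> a \<in> A}"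

definition dir_inf_bounded :: "('a::real_normed_vector \<Rightarrow> ('a \<Rightarrow>\<^sub>L real) set) \<Rightarrow> 'a \<Rightarrow> bool" where
  "dir_inf_bounded T x \<longleftrightarrow>
     (\<forall>y. \<exists>\<epsilon>>0. \<exists>M>0. \<forall>z \<in> Kset y (ball x \<epsilon>) \<inter> dom_op T.
        \<exists>zs \<in> T z. blinfun_apply zs (z - y) \<le> M * norm (z - y))"

end

theory Submission
  imports Defs
begin

lemma bound_from_ball:
  fixes f :: "'a::real_normed_vector \<Rightarrow>\<^sub>L real"
  assumes c: "c > 0" and h: "\<And>v. norm v \<le> c \<Longrightarrow> blinfun_apply f v \<le> N"
  shows "norm f \<le> N / c"
proof (rule norm_blinfun_bound)
  have N0: "0 \<le> N" using h[of 0] c by simp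
  then show "0 \<le> N / c" using c by simp
  fix v :: 'a
  show "norm (blinfun_apply f v) \<le> N / c * norm v"
  proof (cases "v = 0")
    case True then show ?thesis by simp
  next
    case False
    then have nv: "norm v > 0" by simp
    have "blinfun_apply f ((c / norm v) *\<^sub>R v) \<le> N"
      using h c nv by simp
    then have a: "(c / norm v) * blinfun_apply f v \<le> N" by (simp add: blinfun.scaleR_right)
    have "blinfun_apply f ((c / norm v) *\<^sub>R (-v)) \<le> N"
      using h c nv by simp
    then have b: "-((c / norm v) * blinfun_apply f v) \<le> N"
      by (simp add: blinfun.scaleR_right blinfun.minus_right)
    have "\<bar>(c / norm v) * blinfun_apply f v\<bar> \<le> N" using a b by linarith
    then have "(c / norm v) * \<bar>blinfun_apply f v\<bar> \<le> N" using c nv by (simp add: abs_mult)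
    then have "c * \<bar>blinfun_apply f v\<bar> \<le> N * norm v" using nv by (simp add: field_simps)
    then show ?thesis using c by (simp add: field_simps)
  qed
qed

lemma mono_ineq:
  assumes "monotone_op T" "xs \<in> T x" "ys \<in> T y"
  shows "blinfun_apply ys (x - y) \<le> blinfun_apply xs (x - y)"
  using assms unfolding monotone_op_def by (force simp: blinfun.diff_left)

lemma closed_F:
  fixes T :: "'a::real_normed_vector \<Rightarrow> ('a \<Rightarrow>\<^sub>L real) set"
  shows "closed {u. \<forall>w\<in>B. \<forall>ws\<in>T w. blinfun_apply ws (u - w) \<le> c}"
proof -
  have "{u. \<forall>w\<in>B. \<forall>ws\<in>T w. blinfun_apply ws (u - w) \<le> c}
        = (\<Inter>w\<in>B. \<Inter>ws\<in>T w. {u. blinfun_apply ws (u - w) \<le> c})" by auto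
  also have "closed \<dots>"
    by (intro closed_INT ballI closed_Collect_le continuous_intros)
  finally show ?thesis .
qed

lemma loc_bdd:
  fixes T :: "'a::banach \<Rightarrow> ('a \<Rightarrow>\<^sub>L real) set"
  assumes mono: "monotone_op T" and x: "x \<in> interior (dom_op T)"
  shows "\<exists>\<delta>>0. ball x \<delta> \<subseteq> dom_op T \<and> (\<exists>K. \<forall>w\<in>ball x \<delta>. \<forall>ws\<in>T w. norm ws \<le> K)"
proof -
  obtain r where r: "r > 0" "ball x r \<subseteq> dom_op T"
    using x by (meson mem_interior)
  define d where "d = r / 2"
  have d: "d > 0" "d \<le> r" using r by (auto simp: d_def)
  define F where "F n = {u. \<forall>w\<in>ball x d. \<forall>ws\<in>T w. blinfun_apply ws (u - w) \<le> real n}" for n :: nat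
  have clF: "closed (F n)" for n unfolding F_def by (rule closed_F)
  have cover: "\<exists>n. u \<in> F n" if u: "u \<in> dom_op T" "norm (u - x) < r" for u
  proof -
    obtain us where us: "us \<in> T u" using u unfolding dom_op_def by auto
    obtain n :: nat where n: "norm us * (2 * r) < real n" using reals_Archimedean2 by blast
    have "u \<in> F n" unfolding F_def
    proof (intro CollectI ballI)
      fix w ws assume w: "w \<in> ball x d" and ws: "ws \<in> T w"
      have "blinfun_apply ws (u - w) \<le> blinfun_apply us (u - w)"
        using mono_ineq[OF mono us ws] .
      also have "\<dots> \<le> norm us * norm (u - w)" using norm_blinfun[of us "u - w"] by simp
      also have "norm (u - w) \<le> 2 * r"
      proof -
        have "norm (u - w) \<le> norm (u - x) + norm (x - w)" using norm_triangle_ineq[of "u - x" "x - w"] by simp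
        moreover have "norm (x - w) < r" using w d by (simp add: dist_norm)
        ultimately show ?thesis using u by linarith
      qed
      then have "norm us * norm (u - w) \<le> norm us * (2 * r)" by (simp add: mult_left_mono)
      finally show "blinfun_apply ws (u - w) \<le> real n" using n by linarith
    qed
    then show ?thesis by blast
  qed
  have "ball x r \<subseteq> \<Union>(range F)"
  proof
    fix u assume u: "u \<in> ball x r"
    then have "u \<in> dom_op T" using r by auto
    moreover have "norm (u - x) < r" using u by (simp add: dist_norm norm_minus_commute)
    ultimately show "u \<in> \<Union>(range F)" using cover by blast
  qed
  then have "interior (\<Union>(range F)) \<noteq> {}"
    using r interior_mono[of "ball x r"] by (metis centre_in_ball empty_iff interior_ball subsetD)
  then have "\<not> (\<forall>S\<in>range F. closedin euclidean S \<and> euclidean interior_of S = {})"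
    using Baire_category_alt[of euclidean "range F"] completely_metrizable_space_euclidean
    by auto
  then obtain n where "interior (F n) \<noteq> {}" using clF closed_closedin by auto
  then obtain u0 where "u0 \<in> interior (F n)" by auto
  then obtain \<rho> where rho: "\<rho> > 0" "ball u0 \<rho> \<subseteq> F n" by (meson mem_interior)
  define s where "s = r / (2 * (norm (x - u0) + 1))"
  have s: "s > 0" using r unfolding s_def by (intro divide_pos_pos) (auto intro: add_nonneg_pos)
  define x' where "x' = x + s *\<^sub>R (x - u0)"
  have "norm (x' - x) = s * norm (x - u0)" using s by (simp add: x'_def)
  also have "\<dots> < r"
  proof -
    have "s * norm (x - u0) = r / 2 * (norm (x - u0) / (norm (x - u0) + 1))"
      by (simp add: s_def field_simps)
    also have "\<dots> < r"
    proof -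
      have "norm (x - u0) / (norm (x - u0) + 1) < 1"
        by (simp add: divide_less_eq add_nonneg_pos)
      then have "r / 2 * (norm (x - u0) / (norm (x - u0) + 1)) < r / 2 * 1"
        using r by (intro mult_strict_left_mono) auto
      then show ?thesis using r by linarith
    qed
    finally show ?thesis .
  qed
  finally have x'r: "norm (x' - x) < r" .
  then have "x' \<in> dom_op T" using r by (auto simp: dist_norm norm_minus_commute)
  then obtain m where m: "x' \<in> F m" using cover x'r by blast
  define N where "N = max (real n) (real m)"
  define \<eta> where "\<eta> = \<rho> * s / (1 + s)"
  have eta: "\<eta> > 0" using rho s by (simp add: \<eta>_def)
  define \<delta> where "\<delta> = min d (\<eta> / 2)"
  have dl: "\<delta> > 0" using d eta by (simp add: \<delta>_def)
  have key: "norm ws \<le> N / (\<eta> / 2)" if w: "w \<in> ball x \<delta>" and ws: "ws \<in> T w" for w ws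
  proof (rule bound_from_ball)
    show "\<eta> / 2 > 0" using eta by simp
    fix v :: 'a assume v: "norm v \<le> \<eta> / 2"
    have wd: "w \<in> ball x d" using w by (auto simp: \<delta>_def)
    define e where "e = ((1 + s) / s) *\<^sub>R (w + v - x)"
    have "norm (w + v - x) \<le> norm (w - x) + norm v" 
      by (metis add_diff_eq add.commute diff_add_eq norm_triangle_ineq)
    moreover have "norm (w - x) < \<eta> / 2" using w by (simp add: \<delta>_def dist_norm norm_minus_commute)
    ultimately have wv: "norm (w + v - x) < \<eta>" using v by linarith
    have "norm e = (1 + s) / s * norm (w + v - x)" using s by (simp add: e_def)
    also have "\<dots> < (1 + s) / s * \<eta>" using wv s by (intro mult_strict_left_mono) auto
    also have "\<dots> = \<rho>" using s by (simp add: \<eta>_def)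
    finally have "norm e < \<rho>" .
    then have "u0 + e \<in> F n" using rho by (auto simp: dist_norm)
    then have A: "blinfun_apply ws (u0 + e - w) \<le> N" using wd ws unfolding F_def N_def by force
    have B: "blinfun_apply ws (x' - w) \<le> N" using m wd ws unfolding F_def N_def by force
    have eq: "(1 / (1 + s)) *\<^sub>R (x' - w) + (s / (1 + s)) *\<^sub>R (u0 + e - w) = v"
    proof -
      have e1: "(s / (1 + s)) *\<^sub>R e = w + v - x" using s by (simp add: e_def)
      have e2: "(x' - w) + s *\<^sub>R (u0 - w) = (1 + s) *\<^sub>R (x - w)"
        unfolding x'_def by (simp add: algebra_simps)
      have e3: "(1 / (1 + s)) *\<^sub>R (x' - w) + (s / (1 + s)) *\<^sub>R (u0 - w)
          = (1 / (1 + s)) *\<^sub>R ((x' - w) + s *\<^sub>R (u0 - w))"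
        by (simp add: scaleR_add_right)
      have e4: "(1 / (1 + s)) *\<^sub>R ((1 + s) *\<^sub>R (x - w)) = x - w" using s by simp
      have "(1 / (1 + s)) *\<^sub>R (x' - w) + (s / (1 + s)) *\<^sub>R (u0 + e - w)
          = ((1 / (1 + s)) *\<^sub>R (x' - w) + (s / (1 + s)) *\<^sub>R (u0 - w)) + (s / (1 + s)) *\<^sub>R e"
        by (simp add: algebra_simps)
      also have "\<dots> = v" unfolding e3 e2 e4 e1 by simp
      finally show ?thesis .
    qed
    have "blinfun_apply ws v = (1 / (1 + s)) * blinfun_apply ws (x' - w) + (s / (1 + s)) * blinfun_apply ws (u0 + e - w)"
      unfolding eq[symmetric] by (simp add: blinfun.add_right blinfun.scaleR_right)
    also have "\<dots> \<le> (1 / (1 + s)) * N + (s / (1 + s)) * N"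
      using A B s by (intro add_mono mult_left_mono) auto
    also have "\<dots> = (1 / (1 + s) + s / (1 + s)) * N" by (simp add: algebra_simps)
    also have "1 / (1 + s) + s / (1 + s) = 1" using s by (simp add: add_divide_distrib[symmetric])
    also have "1 * N = N" by simp
    finally show "blinfun_apply ws v \<le> N" .
  qed
  have "ball x \<delta> \<subseteq> dom_op T" using r d by (auto simp: \<delta>_def)
  then show ?thesis using dl key by blast
qed

theorem lemma2p13:
  fixes T :: "'a::banach \<Rightarrow> ('a \<Rightarrow>\<^sub>L real) set"
  assumes "maximal_monotone_op T"
    and "interior (dom_op T) \<noteq> {}"
  shows "\<forall>x \<in> interior (dom_op T). dir_inf_bounded T x"
proof
  fix x assume x: "x \<in> interior (dom_op T)"
  have mono: "monotone_op T" using assms(1) unfolding maximal_monotone_op_def by simp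
  obtain \<delta> K where dl: "\<delta> > 0" "ball x \<delta> \<subseteq> dom_op T"
    and K: "\<And>w ws. w \<in> ball x \<delta> \<Longrightarrow> ws \<in> T w \<Longrightarrow> norm ws \<le> K"
    using loc_bdd[OF mono x] by blast
  define M where "M = max K 0 + 1"
  have M: "M > 0" "K \<le> M" by (auto simp: M_def)
  have main: "\<exists>zs\<in>T z. blinfun_apply zs (z - y) \<le> M * norm (z - y)"
    if z: "z \<in> Kset y (ball x \<delta>) \<inter> dom_op T" for y z
  proof -
    from z obtain t a where ta: "0 \<le> t" "t \<le> 1" "a \<in> ball x \<delta>" "z = (1 - t) *\<^sub>R y + t *\<^sub>R a"
      unfolding Kset_def by blast
    have zD: "z \<in> dom_op T" using z by blast
    obtain zs where zs: "zs \<in> T z" using zD unfolding dom_op_def by auto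
    have "a \<in> dom_op T" using ta dl by auto
    then obtain as where as: "as \<in> T a" unfolding dom_op_def by auto
    have asb: "norm as \<le> M" using K[OF ta(3) as] M by simp
    have zy: "z - y = t *\<^sub>R (a - y)" using ta(4) by (simp add: algebra_simps)
    have za: "z - a = (1 - t) *\<^sub>R (y - a)" using ta(4) by (simp add: algebra_simps)
    have bnd: "blinfun_apply as (z - y) \<le> M * norm (z - y)"
    proof -
      have "blinfun_apply as (z - y) \<le> norm as * norm (z - y)"
        using norm_blinfun[of as "z - y"] by simp
      also have "\<dots> \<le> M * norm (z - y)" using asb by (simp add: mult_right_mono)
      finally show ?thesis .
    qed
    show "\<exists>zs\<in>T z. blinfun_apply zs (z - y) \<le> M * norm (z - y)"
    proof (cases "t = 1")
      case True
      then have "z = a" using ta(4) by simp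
      then show ?thesis using as bnd by blast
    next
      case False
      then have t1: "t < 1" using ta by simp
      have "blinfun_apply as (z - a) \<le> blinfun_apply zs (z - a)" by (rule mono_ineq[OF mono zs as])
      then have "(1 - t) * blinfun_apply as (y - a) \<le> (1 - t) * blinfun_apply zs (y - a)"
        unfolding za by (simp add: blinfun.scaleR_right)
      then have "blinfun_apply as (y - a) \<le> blinfun_apply zs (y - a)" using t1 by simp
      then have "blinfun_apply zs (a - y) \<le> blinfun_apply as (a - y)"
        using blinfun.minus_right[of zs "a - y"] blinfun.minus_right[of as "a - y"] by simp
      then have "t * blinfun_apply zs (a - y) \<le> t * blinfun_apply as (a - y)"
        using ta(1) by (simp add: mult_left_mono)
      then have "blinfun_apply zs (z - y) \<le> blinfun_apply as (z - y)"
        unfolding zy by (simp add: blinfun.scaleR_right)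
      then have "blinfun_apply zs (z - y) \<le> M * norm (z - y)" using bnd by linarith
      then show ?thesis using zs by blast
    qed
  qed
  show "dir_inf_bounded T x" unfolding dir_inf_bounded_def
    using main dl(1) M(1) by blast
qed

end
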